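(* Let $0<a,b<1$, $f\ge3$, and let $q^*_n,w^*_n,\overline q_n$ be as in the context. Let $$Q(b):=\begin{bmatrix}q^*_1(b)&w^*_1(b)\\ q^*_2(b)&w^*_2(b)\end{bmatrix},\quad B:=\begin{bmatrix}\frac{b-a}{1-a}&\frac{1-b}{1-a}\\ \frac{b-a}{1-a}\beta(a,b)-x(a,b)&\frac{1-b}{1-a}\beta(a,b)\end{bmatrix},\quad M:=Q(b)^{-1}B.$$ Then for all $j\ge1$, $$\overline q_{f+j-1}=\begin{bmatrix}q^*_j(b)&w^*_j(b)\end{bmatrix}M\begin{bmatrix}q^*_{f-1}(a)\\ q^*_f(a)\end{bmatrix}.$$
   Context: Let $r,y,z$ be indeterminates. For $c\in(0,1)$: $\omega_c:=1-(1-c)^2r^2y^2z^2$, $\tau_c:=1+(1-c)^2r^2z^2y(1-y)$, $x_c:=c^2z^2\tau_c^2$, $\beta_c:=1+z^2(c^2-(1-c)^2r^2(y^2+c^2(1-y)^2z^2))$; $w^*_0(c):=(\beta_c-\omega_c)/x_c$, $w^*_1(c):=1$, $w^*_{n+1}(c):=\beta_cw^*_n(c)-x_cw^*_{n-1}(c)$ ($n\ge1$); $q^*_0(c):=-(1-y)(1+y+(1-c)^2r^2y^2z^2(1-y))/\tau_c^2$, $q^*_1(c):=y^2$, $q^*_{n+1}(c):=\beta_cq^*_n(c)-x_cq^*_{n-1}(c)$ ($n\ge1$). Also $\tau(a,b):=1+(1-a)(1-b)r^2z^2y(1-y)$, $x(a,b):=b^2z^2\tau(a,b)^2$, $\beta(a,b):=\beta_b-(b-a)b^2(1-b)r^2(1-y)^2z^4$.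 The sequence $\overline q_n$, $n\ge1$: $\overline q_n:=q^*_n(a)$ for $1\le n<f$; $\overline q_f:=\frac{1-b}{1-a}q^*_f(a)+\frac{b-a}{1-a}q^*_{f-1}(a)$; $\overline q_{f+1}:=\beta(a,b)\overline q_f-x(a,b)\overline q_{f-1}$; $\overline q_{f+j+1}:=\beta_b\overline q_{f+j}-x_b\overline q_{f+j-1}$ for $j\ge1$. *)

theory Defs
  imports "HOL-Analysis.Analysis"
begin

text \<open>The indeterminates r, y, z are evaluated at real points; parameters c, a, b are reals.\<close>

definition omega_c :: "real \<Rightarrow> real \<Rightarrow> real \<Rightarrow> real \<Rightarrow> real" where
  "omega_c r y z c = 1 - (1-c)^2 * r^2 * y^2 * z^2"

definition tau_c :: "real \<Rightarrow> real \<Rightarrow> real \<Rightarrow> real \<Rightarrow> real" where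
  "tau_c r y z c = 1 + (1-c)^2 * r^2 * z^2 * y * (1-y)"

definition x_c :: "real \<Rightarrow> real \<Rightarrow> real \<Rightarrow> real \<Rightarrow> real" where
  "x_c r y z c = c^2 * z^2 * (tau_c r y z c)^2"

definition beta_c :: "real \<Rightarrow> real \<Rightarrow> real \<Rightarrow> real \<Rightarrow> real" where
  "beta_c r y z c = 1 + z^2 * (c^2 - (1-c)^2 * r^2 * (y^2 + c^2 * (1-y)^2 * z^2))"

fun wstar :: "real \<Rightarrow> real \<Rightarrow> real \<Rightarrow> real \<Rightarrow> nat \<Rightarrow> real" where
  "wstar r y z c 0 = (beta_c r y z c - omega_c r y z c) / x_c r y z c"
| "wstar r y z c (Suc 0) = 1"
| "wstar r y z c (Suc (Suc n)) =
     beta_c r y z c * wstar r y z c (Suc n) - x_c r y z c * wstar r y z c n"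

fun qstar :: "real \<Rightarrow> real \<Rightarrow> real \<Rightarrow> real \<Rightarrow> nat \<Rightarrow> real" where
  "qstar r y z c 0 = - (1-y) * (1 + y + (1-c)^2 * r^2 * y^2 * z^2 * (1-y)) / (tau_c r y z c)^2"
| "qstar r y z c (Suc 0) = y^2"
| "qstar r y z c (Suc (Suc n)) =
     beta_c r y z c * qstar r y z c (Suc n) - x_c r y z c * qstar r y z c n"

definition tau_ab :: "real \<Rightarrow> real \<Rightarrow> real \<Rightarrow> real \<Rightarrow> real \<Rightarrow> real" where
  "tau_ab r y z a b = 1 + (1-a) * (1-b) * r^2 * z^2 * y * (1-y)"

definition x_ab :: "real \<Rightarrow> real \<Rightarrow> real \<Rightarrow> real \<Rightarrow> real \<Rightarrow> real" where
  "x_ab r y z a b = b^2 * z^2 * (tau_ab r y z a b)^2"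

definition beta_ab :: "real \<Rightarrow> real \<Rightarrow> real \<Rightarrow> real \<Rightarrow> real \<Rightarrow> real" where
  "beta_ab r y z a b = beta_c r y z b - (b-a) * b^2 * (1-b) * r^2 * (1-y)^2 * z^4"

text \<open>The sequence qbar_n (only meaningful for n \<ge> 1).\<close>
function qbar :: "real \<Rightarrow> real \<Rightarrow> real \<Rightarrow> real \<Rightarrow> real \<Rightarrow> nat \<Rightarrow> nat \<Rightarrow> real" where
  "qbar r y z a b f n =
     (if n < f then qstar r y z a n
      else if n = f then (1-b)/(1-a) * qstar r y z a f + (b-a)/(1-a) * qstar r y z a (f-1)
      else if n = f + 1 then beta_ab r y z a b * qbar r y z a b f f - x_ab r y z a b * qbar r y z a b f (f-1)
      else beta_c r y z b * qbar r y z a b f (n-1) - x_c r y z b * qbar r y z a b f (n-2))"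
  by pat_completeness auto
termination
  by (relation "Wellfounded.measure (\<lambda>(r,y,z,a,b,f,n). n)") auto

definition Qmat :: "real \<Rightarrow> real \<Rightarrow> real \<Rightarrow> real \<Rightarrow> real^2^2" where
  "Qmat r y z b = vector [vector [qstar r y z b 1, wstar r y z b 1],
                          vector [qstar r y z b 2, wstar r y z b 2]]"

definition Bmat :: "real \<Rightarrow> real \<Rightarrow> real \<Rightarrow> real \<Rightarrow> real \<Rightarrow> real^2^2" where
  "Bmat r y z a b = vector [vector [(b-a)/(1-a), (1-b)/(1-a)],
     vector [(b-a)/(1-a) * beta_ab r y z a b - x_ab r y z a b, (1-b)/(1-a) * beta_ab r y z a b]]"

definition Mmat :: "real \<Rightarrow> real \<Rightarrow> real \<Rightarrow> real \<Rightarrow> real \<Rightarrow> real^2^2" where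
  "Mmat r y z a b = matrix_inv (Qmat r y z b) ** Bmat r y z a b"

end

theory Submission
  imports Defs
begin

declare qbar.simps[simp del]

lemma vec2_1[simp]: "(vector [p, q] :: real^2) $ 1 = p" by simp
lemma vec2_2[simp]: "(vector [p, q] :: real^2) $ 2 = q" by simp

lemma mv2_1: "((A::real^2^2) *v v) $ 1 = A$1$1 * v$1 + A$1$2 * v$2"
  by (simp add: matrix_vector_mult_def sum_2)
lemma mv2_2: "((A::real^2^2) *v v) $ 2 = A$2$1 * v$1 + A$2$2 * v$2"
  by (simp add: matrix_vector_mult_def sum_2)

lemma qbar_lt: "n < f \<Longrightarrow> qbar r y z a b f n = qstar r y z a n"
  by (subst qbar.simps) simp
lemma qbar_f: "qbar r y z a b f f = (1-b)/(1-a) * qstar r y z a f + (b-a)/(1-a) * qstar r y z a (f-1)"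
  by (subst qbar.simps) simp
lemma qbar_f1: "qbar r y z a b f (f+1) = beta_ab r y z a b * qbar r y z a b f f - x_ab r y z a b * qbar r y z a b f (f-1)"
  by (subst qbar.simps) simp
lemma qbar_big: "n \<ge> f + 2 \<Longrightarrow> qbar r y z a b f n = beta_c r y z b * qbar r y z a b f (n-1) - x_c r y z b * qbar r y z a b f (n-2)"
  by (subst qbar.simps) simp

lemma my_inv_right: "invertible (A::real^2^2) \<Longrightarrow> A ** matrix_inv A = mat 1"
  unfolding invertible_def matrix_inv_def by (metis (mono_tags, lifting) someI_ex)

theorem lemma5:
  fixes r y z a b :: real and f j :: nat
  assumes "0 < a" "a < 1" "0 < b" "b < 1" "f \<ge> 3" "j \<ge> 1"
    and "z \<noteq> 0" "tau_c r y z a \<noteq> 0" "tau_c r y z b \<noteq> 0"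
    and "invertible (Qmat r y z b)"
  shows "qbar r y z a b f (f + j - 1) =
    (vector [qstar r y z b j, wstar r y z b j] :: real^2) \<bullet>
      (Mmat r y z a b *v (vector [qstar r y z a (f-1), qstar r y z a f] :: real^2))"
proof -
  define v where "v = (vector [qstar r y z a (f-1), qstar r y z a f] :: real^2)"
  define c where "c = Mmat r y z a b *v v"
  have "Qmat r y z b *v c = Bmat r y z a b *v v"
    unfolding c_def Mmat_def
    using assms(10) by (simp add: matrix_vector_mul_assoc matrix_mul_assoc my_inv_right)
  then have e1: "(Qmat r y z b *v c) $ 1 = (Bmat r y z a b *v v) $ 1"
    and e2: "(Qmat r y z b *v c) $ 2 = (Bmat r y z a b *v v) $ 2" by auto
  have fm1: "f - 1 < f" using assms(5) by simp
  have h1: "qbar r y z a b f f = c$1 * qstar r y z b 1 + c$2 * wstar r y z b 1"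
    using e1 unfolding mv2_1 by (simp add: Qmat_def Bmat_def v_def qbar_f algebra_simps)
  have h2: "qbar r y z a b f (f+1) = c$1 * qstar r y z b 2 + c$2 * wstar r y z b 2"
    using e2 unfolding mv2_2 qbar_f1 qbar_lt[OF fm1]
    by (simp add: Qmat_def Bmat_def v_def qbar_f algebra_simps)
  have P: "qbar r y z a b f (f + k) = c$1 * qstar r y z b (Suc k) + c$2 * wstar r y z b (Suc k)
     \<and> qbar r y z a b f (f + Suc k) = c$1 * qstar r y z b (Suc (Suc k)) + c$2 * wstar r y z b (Suc (Suc k))" for k
  proof (induction k)
    case 0
    then show ?case using h1 h2 by (simp add: numeral_2_eq_2)
  next
    case (Suc k)
    have "qbar r y z a b f (f + Suc (Suc k)) = beta_c r y z b * qbar r y z a b f (f + Suc k) - x_c r y z b * qbar r y z a b f (f + k)"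
      by (subst qbar_big) auto
    also have "\<dots> = c$1 * qstar r y z b (Suc (Suc (Suc k))) + c$2 * wstar r y z b (Suc (Suc (Suc k)))"
      using Suc.IH by (simp only: qstar.simps wstar.simps) (simp add: algebra_simps)
    finally show ?case using Suc.IH by simp
  qed
  obtain k where k: "j = Suc k" using assms(6) by (cases j) auto
  have "qbar r y z a b f (f + j - 1) = c$1 * qstar r y z b j + c$2 * wstar r y z b j"
    using P[of k] k by simp
  then show ?thesis unfolding c_def[symmetric] v_def[symmetric]
    by (simp add: inner_vec_def sum_2)
qed

end
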